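(* Let $p\in(0,1)$, let $\ell\ge 1$ be fixed, and let $x_e$, $e\in\binom{[n]}{2}$, be independent Bernoulli($p$) random variables, with $\chi_e=(x_e-p)/\sqrt{p(1-p)}$. Suppose \[F(\mathbf{x})=\sum_{H:\,v(H)\le\ell}\binom{n-v(H)}{\ell-v(H)}\Phi_H\,\gamma_H(\mathbf{x}),\] where the sum is over isomorphism classes of graphs $H$ without isolated vertices on at most $\ell$ vertices, the $\Phi_H$ are real constants independent of $n$, and (1) $\Phi_H=0$ for every connected graph $H$ on $3$ or $4$ vertices; (2) $\Phi_{K_2}\neq0$ and $\Phi_{K_2+K_2}\neq 0$, where $K_2+K_2$ is the disjoint union of two edges. Suppose further that $F$ is integer valued. Then there is a sequence $(y_n)$ such that $\mathbb{P}[F(\mathbf{x})=y_n]\gtrsim n^{3/2-\ell}$, the implicit constant depending on $p$ and the constants $\Phi_H$ (and $\ell$).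
   Context: For a graph $H$ with no isolated vertices, the graph factor is $\gamma_H(\mathbf{x})=\sum_{E\subseteq\binom{[n]}{2},\,E\simeq H}\prod_{e\in E}\chi_e$, the sum over edge sets $E$ whose spanned graph is isomorphic to $H$; for the empty graph $\gamma_{K_0}=1$. *)

theory Defs
  imports Complex_Main
begin

text \<open>Graphs without isolated vertices are represented by their edge sets
  (sets of 2-element subsets of nat); the vertex set is the union of the edges.\<close>

definition is_graph :: "nat set set \<Rightarrow> bool" where
  "is_graph E \<longleftrightarrow> finite E \<and> (\<forall>e\<in>E. card e = 2)"

definition vert :: "nat set set \<Rightarrow> nat set" where
  "vert E = \<Union>E"

definition graph_iso :: "nat set set \<Rightarrow> nat set set \<Rightarrow> bool" where
  "graph_iso E E' \<longleftrightarrow> (\<exists>f. bij_betw f (vert E) (vert E') \<and> (\<lambda>e. f ` e) ` E = E')"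

definition isoclass :: "nat set set \<Rightarrow> nat set set set" where
  "isoclass E = {E'. is_graph E' \<and> graph_iso E E'}"

definition graph_classes :: "nat \<Rightarrow> nat set set set set" where
  "graph_classes l = {isoclass E | E. is_graph E \<and> card (vert E) \<le> l}"

definition class_v :: "nat set set set \<Rightarrow> nat" where
  "class_v C = card (vert (SOME E. E \<in> C))"

definition connected_graph :: "nat set set \<Rightarrow> bool" where
  "connected_graph E \<longleftrightarrow>
     (\<forall>u\<in>vert E. \<forall>v\<in>vert E. (u, v) \<in> ({(a, b). {a, b} \<in> E})\<^sup>*)"

definition Kedges :: "nat \<Rightarrow> nat set set" where
  "Kedges n = {{i, j} | i j. i < n \<and> j < n \<and> i \<noteq> j}"

text \<open>A sample of the random graph is the set G \<subseteq> Kedges n of edges e with x_e = 1.\<close>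
definition chi :: "real \<Rightarrow> nat set set \<Rightarrow> nat set \<Rightarrow> real" where
  "chi p G e = ((if e \<in> G then 1 else 0) - p) / sqrt (p * (1 - p))"

definition gamma :: "real \<Rightarrow> nat \<Rightarrow> nat set set set \<Rightarrow> nat set set \<Rightarrow> real" where
  "gamma p n C G = (\<Sum>E\<in>{E. E \<subseteq> Kedges n \<and> E \<in> C}. \<Prod>e\<in>E. chi p G e)"

definition prob_G :: "real \<Rightarrow> nat \<Rightarrow> (nat set set \<Rightarrow> bool) \<Rightarrow> real" where
  "prob_G p n S = (\<Sum>G\<in>{G. G \<subseteq> Kedges n \<and> S G}.
      p ^ card G * (1 - p) ^ (card (Kedges n) - card G))"

definition Fpoly :: "nat \<Rightarrow> (nat set set set \<Rightarrow> real) \<Rightarrow> real \<Rightarrow> nat \<Rightarrow> nat set set \<Rightarrow> real" where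
  "Fpoly l Phi p n G = (\<Sum>C\<in>graph_classes l.
      real ((n - class_v C) choose (l - class_v C)) * Phi C * gamma p n C G)"

end

theory Submission
  imports Defs
begin


lemma graph_iso_refl: "graph_iso E E"
  unfolding graph_iso_def by (rule exI[of _ id]) auto

lemma graph_iso_sym: assumes "graph_iso E E'" shows "graph_iso E' E"
proof -
  obtain f where f: "bij_betw f (vert E) (vert E')" "(\<lambda>e. f ` e) ` E = E'"
    using assms unfolding graph_iso_def by blast
  let ?g = "inv_into (vert E) f"
  have "bij_betw ?g (vert E') (vert E)" using f(1) by (rule bij_betw_inv_into)
  moreover have "(\<lambda>e. ?g ` e) ` E' = E"
  proof -
    have "(\<lambda>e. ?g ` e) ` E' = (\<lambda>e. ?g ` f ` e) ` E" using f(2) by auto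
    also have "\<dots> = E"
    proof (rule image_cong[THEN trans, OF refl], rule inv_into_image_cancel)
      show "inj_on f (vert E)" using f(1) bij_betw_def by blast
    next
      fix e assume "e \<in> E" thus "e \<subseteq> vert E" unfolding vert_def by auto
    qed simp
    finally show ?thesis .
  qed
  ultimately show ?thesis unfolding graph_iso_def by blast
qed

lemma graph_iso_trans: assumes "graph_iso E E'" "graph_iso E' E''" shows "graph_iso E E''"
proof -
  obtain f where f: "bij_betw f (vert E) (vert E')" "(\<lambda>e. f ` e) ` E = E'"
    using assms unfolding graph_iso_def by blast
  obtain g where g: "bij_betw g (vert E') (vert E'')" "(\<lambda>e. g ` e) ` E' = E''"
    using assms unfolding graph_iso_def by blast
  have "bij_betw (g \<circ> f) (vert E) (vert E'')" using f g bij_betw_trans by blast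
  moreover have "(\<lambda>e. (g \<circ> f) ` e) ` E = E''" using f(2) g(2) by (auto simp: image_comp)
  ultimately show ?thesis unfolding graph_iso_def by blast
qed

lemma graph_iso_card: "graph_iso E E' \<Longrightarrow> card (vert E) = card (vert E')"
  unfolding graph_iso_def using bij_betw_same_card by blast

lemma isoclass_eq: assumes "graph_iso E0 E" shows "isoclass E = isoclass E0"
  unfolding isoclass_def using assms graph_iso_trans graph_iso_sym by blast

lemma class_v_isoclass: assumes "is_graph E" shows "class_v (isoclass E) = card (vert E)"
proof -
  have "E \<in> isoclass E" using assms graph_iso_refl unfolding isoclass_def by blast
  hence "(SOME E'. E' \<in> isoclass E) \<in> isoclass E" by (rule someI)
  thus ?thesis unfolding class_v_def isoclass_def using graph_iso_card by auto
qed

lemma is_graph_finite_vert: assumes "is_graph E" shows "finite (vert E)"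
proof -
  have "\<forall>e\<in>E. finite e" using assms unfolding is_graph_def by (auto intro: card_ge_0_finite)
  thus ?thesis using assms unfolding is_graph_def vert_def by auto
qed

lemma finite_graph_classes: "finite (graph_classes l)"
proof -
  have "graph_classes l \<subseteq> isoclass ` Pow (Pow {0..<l})"
  proof
    fix C assume "C \<in> graph_classes l"
    then obtain E where E: "C = isoclass E" "is_graph E" "card (vert E) \<le> l"
      unfolding graph_classes_def by blast
    obtain f where f: "bij_betw f (vert E) {0..<card (vert E)}"
      using ex_bij_betw_finite_nat is_graph_finite_vert[OF E(2)] by blast
    define E' where "E' = (\<lambda>e. f ` e) ` E"
    have v: "vert E' = f ` vert E" unfolding E'_def vert_def by auto
    have "bij_betw f (vert E) (vert E')" using bij_betw_imp_inj_on[OF f] v by (simp add: bij_betw_def)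
    hence "graph_iso E E'" unfolding graph_iso_def E'_def by (intro exI[of _ f]) simp
    hence "C = isoclass E'" using E(1) isoclass_eq by simp
    moreover have "E' \<in> Pow (Pow {0..<l})"
    proof -
      have "vert E' \<subseteq> {0..<l}" using v f E(3) unfolding bij_betw_def by auto
      thus ?thesis unfolding vert_def by auto
    qed
    ultimately show "C \<in> isoclass ` Pow (Pow {0..<l})" by blast
  qed
  thus ?thesis by (rule finite_subset) auto
qed



definition chiE :: "real \<Rightarrow> nat set set \<Rightarrow> nat set set \<Rightarrow> real" where
  "chiE p G E = (\<Prod>e\<in>E. chi p G e)"

definition cf :: "nat \<Rightarrow> (nat set set set \<Rightarrow> real) \<Rightarrow> nat \<Rightarrow> nat set set \<Rightarrow> real" where
  "cf l Phi n E = real ((n - card (vert E)) choose (l - card (vert E))) * Phi (isoclass E)"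

definition Uset :: "nat \<Rightarrow> nat \<Rightarrow> nat set set set" where
  "Uset l n = {E. E \<subseteq> Kedges n \<and> card (vert E) \<le> l}"

lemma Kedges_sub: "Kedges n \<subseteq> Pow {0..<n}"
  unfolding Kedges_def by auto

lemma finite_Kedges: "finite (Kedges n)"
  using Kedges_sub by (rule finite_subset) auto

lemma Kedges_card: "e \<in> Kedges n \<Longrightarrow> card e = 2"
  unfolding Kedges_def by auto

lemma sub_Kedges_graph: "E \<subseteq> Kedges n \<Longrightarrow> is_graph E"
  unfolding is_graph_def using finite_Kedges Kedges_card finite_subset by blast

lemma finite_Uset: "finite (Uset l n)"
  unfolding Uset_def by (rule finite_subset[of _ "Pow (Kedges n)"]) (auto simp: finite_Kedges)

lemma isoclass_mem: "is_graph E \<Longrightarrow> E \<in> isoclass E"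
  unfolding isoclass_def using graph_iso_refl by blast

lemma Fpoly_eq: "Fpoly l Phi p n G = (\<Sum>E\<in>Uset l n. cf l Phi n E * chiE p G E)"
proof -
  define A where "A C = {E. E \<subseteq> Kedges n \<and> E \<in> C}" for C :: "nat set set set"
  have fA: "finite (A C)" for C unfolding A_def by (rule finite_subset[of _ "Pow (Kedges n)"]) (auto simp: finite_Kedges)
  have memA: "C = isoclass E \<and> class_v C = card (vert E) \<and> card (vert E) \<le> l"
    if hC: "C \<in> graph_classes l" and hE: "E \<in> A C" for C E
  proof -
    obtain E0 where E0: "C = isoclass E0" "is_graph E0" "card (vert E0) \<le> l"
      using hC unfolding graph_classes_def by blast
    have "graph_iso E0 E" using hE E0(1) unfolding A_def isoclass_def by blast
    hence "isoclass E = C" using E0(1) isoclass_eq by simp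
    moreover have "is_graph E" using hE unfolding A_def by (auto intro: sub_Kedges_graph)
    ultimately show ?thesis using class_v_isoclass graph_iso_card \<open>graph_iso E0 E\<close> E0 by metis
  qed
  have "Fpoly l Phi p n G = (\<Sum>C\<in>graph_classes l. \<Sum>E\<in>A C. cf l Phi n E * chiE p G E)"
    unfolding Fpoly_def gamma_def
  proof (rule sum.cong[OF refl])
    fix C assume C: "C \<in> graph_classes l"
    show "real (n - class_v C choose (l - class_v C)) * Phi C *
        (\<Sum>E\<in>{E. E \<subseteq> Kedges n \<and> E \<in> C}. prod (chi p G) E) =
        (\<Sum>E\<in>A C. cf l Phi n E * chiE p G E)"
      unfolding sum_distrib_left A_def[symmetric]
      by (rule sum.cong[OF refl]) (use memA[OF C] in \<open>auto simp: cf_def chiE_def\<close>)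
  qed
  also have "\<dots> = (\<Sum>E\<in>(\<Union>C\<in>graph_classes l. A C). cf l Phi n E * chiE p G E)"
    proof (rule sum.UNION_disjoint[symmetric])
    show "\<forall>C\<in>graph_classes l. \<forall>C'\<in>graph_classes l. C \<noteq> C' \<longrightarrow> A C \<inter> A C' = {}"
      using memA by blast
  qed (use finite_graph_classes fA in auto)
  also have "(\<Union>C\<in>graph_classes l. A C) = Uset l n"
  proof
    show "(\<Union>C\<in>graph_classes l. A C) \<subseteq> Uset l n"
      using memA unfolding Uset_def by (auto simp: A_def)
    show "Uset l n \<subseteq> (\<Union>C\<in>graph_classes l. A C)"
    proof
      fix E assume E: "E \<in> Uset l n"
      hence g: "is_graph E" unfolding Uset_def using sub_Kedges_graph by blast
      hence "isoclass E \<in> graph_classes l" using E unfolding Uset_def graph_classes_def by blast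
      moreover have "E \<in> A (isoclass E)" using E g isoclass_mem unfolding A_def Uset_def by blast
      ultimately show "E \<in> (\<Union>C\<in>graph_classes l. A C)" by blast
    qed
  qed
  finally show ?thesis .
qed



lemma edge_sub_vert: "e \<in> E \<Longrightarrow> e \<subseteq> vert E"
  unfolding vert_def by auto

lemma vert_empty[simp]: "vert {} = {}" unfolding vert_def by simp

lemma card_vert_ge2: assumes "is_graph E" "E \<noteq> {}" shows "card (vert E) \<ge> 2"
proof -
  obtain e where "e \<in> E" using assms by blast
  hence "card e \<le> card (vert E)" by (intro card_mono[OF is_graph_finite_vert[OF assms(1)]] edge_sub_vert)
  moreover have "card e = 2" using \<open>e \<in> E\<close> assms(1) unfolding is_graph_def by blast
  ultimately show ?thesis by simp
qed

lemma card_vert_0: assumes "is_graph E" "card (vert E) < 2" shows "E = {}"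
  using card_vert_ge2[OF assms(1)] assms(2) by fastforce

lemma card_vert_2: assumes "is_graph E" "card (vert E) = 2" shows "E = {vert E}"
proof -
  have ne: "E \<noteq> {}" using assms by auto
  have "e = vert E" if "e \<in> E" for e
    using card_subset_eq[OF is_graph_finite_vert[OF assms(1)] edge_sub_vert[OF that]] that assms
    unfolding is_graph_def by auto
  thus ?thesis using ne by blast
qed

lemma card_E_1: assumes "card E = 1" "is_graph E" shows "card (vert E) = 2"
proof -
  obtain e where "E = {e}" using assms card_1_singletonE by blast
  thus ?thesis using assms unfolding is_graph_def vert_def by auto
qed

lemma disconnected: assumes g: "is_graph E" and nc: "\<not> connected_graph E"
  shows "card (vert E) \<ge> 4 \<and> (card (vert E) = 4 \<longrightarrow> card E = 2)"
proof -
  define R where "R = {(a, b). {a, b} \<in> E}"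
  obtain u v where uv: "u \<in> vert E" "v \<in> vert E" "(u, v) \<notin> R\<^sup>*"
    using nc unfolding connected_graph_def R_def by blast
  define A where "A = {x. (u, x) \<in> R\<^sup>*}"
  have Rsym: "(x, y) \<in> R \<Longrightarrow> (y, x) \<in> R" for x y unfolding R_def by (simp add: insert_commute)
  have Aclos: "x \<in> A \<longleftrightarrow> y \<in> A" if "{x, y} \<in> E" for x y
  proof -
    have "(x, y) \<in> R" "(y, x) \<in> R" using that Rsym unfolding R_def by auto
    thus ?thesis unfolding A_def by (auto intro: rtrancl_into_rtrancl)
  qed
  have edge2: "\<exists>y. y \<noteq> x \<and> {x, y} \<in> E" if xv: "x \<in> vert E" for x
  proof -
    obtain e where e: "e \<in> E" "x \<in> e" using xv unfolding vert_def by blast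
    then obtain a b where "e = {a, b}" "a \<noteq> b" using g unfolding is_graph_def by (meson card_2_iff)
    thus ?thesis using e by (auto simp: insert_commute)
  qed
  obtain a where a: "a \<noteq> u" "{u, a} \<in> E" using edge2 uv(1) by blast
  obtain b where b: "b \<noteq> v" "{v, b} \<in> E" using edge2 uv(2) by blast
  have uA: "u \<in> A" unfolding A_def by simp
  have vA: "v \<notin> A" using uv(3) unfolding A_def by simp
  have aA: "a \<in> A" using Aclos[OF a(2)] uA by simp
  have bA: "b \<notin> A" using Aclos[OF b(2)] vA by simp
  have sub: "{u, a, v, b} \<subseteq> vert E" using a b edge_sub_vert by blast
  have d: "u \<noteq> v" "u \<noteq> b" "a \<noteq> v" "a \<noteq> b" using uA vA aA bA by auto
  have c4: "card {u, a, v, b} = 4" using a(1) b(1) d by simp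
  have ge: "card (vert E) \<ge> 4" using card_mono[OF is_graph_finite_vert[OF g] sub] c4 by simp
  moreover have "card E = 2" if "card (vert E) = 4"
  proof -
    have V: "vert E = {u, a, v, b}"
      using card_subset_eq[OF is_graph_finite_vert[OF g] sub] c4 that by simp
    have "e = {u, a} \<or> e = {v, b}" if e: "e \<in> E" for e
    proof -
      obtain x y where xy: "e = {x, y}" "x \<noteq> y" using e g unfolding is_graph_def by (meson card_2_iff)
      have xyV: "x \<in> vert E" "y \<in> vert E" using e xy edge_sub_vert by auto
      have "x \<in> A \<longleftrightarrow> y \<in> A" using Aclos e xy by simp
      thus ?thesis using xyV V xy uA vA aA bA by (auto simp: insert_commute)
    qed
    hence "E = {{u, a}, {v, b}}" using a b by blast
    moreover have "{u, a} \<noteq> {v, b}" using uA vA aA bA by (auto simp: doubleton_eq_iff)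
    ultimately show ?thesis by simp
  qed
  ultimately show ?thesis by blast
qed

lemma iso_K2: assumes "E \<subseteq> Kedges n" "card E = 1" shows "isoclass E = isoclass {{0, 1}}"
proof -
  obtain e where e: "E = {e}" using assms card_1_singletonE by blast
  then obtain i j where ij: "e = {i, j}" "i \<noteq> j" using assms unfolding Kedges_def by auto
  define f where "f x = (if x = 0 then i else j)" for x :: nat
  have "bij_betw f {0, 1} {i, j}" unfolding bij_betw_def inj_on_def f_def using ij by auto
  moreover have "(\<lambda>e. f ` e) ` {{0, 1}} = E" using e ij by (auto simp: f_def)
  moreover have "vert {{0::nat, 1}} = {0, 1}" "vert E = {i, j}" using e ij unfolding vert_def by auto
  ultimately have "graph_iso {{0, 1}} E" unfolding graph_iso_def by metis
  thus ?thesis by (rule isoclass_eq)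
qed

lemma iso_2K2: assumes "E \<subseteq> Kedges n" "card E = 2" "card (vert E) = 4"
  shows "isoclass E = isoclass {{0, 1}, {2, 3}}"
proof -
  obtain e1 e2 where e: "E = {e1, e2}" "e1 \<noteq> e2" using assms card_2_iff by metis
  then obtain a b c d where ab: "e1 = {a, b}" "a \<noteq> b" and cd: "e2 = {c, d}" "c \<noteq> d"
    using assms unfolding Kedges_def by auto
  have V: "vert E = {a, b, c, d}" using e ab cd unfolding vert_def by auto
  have dist: "a \<noteq> c" "a \<noteq> d" "b \<noteq> c" "b \<noteq> d"
    using assms(3) ab(2) cd(2) unfolding V by (auto simp: card_insert_if split: if_splits)
  define f where "f x = (if x = 0 then a else if x = 1 then b else if x = 2 then c else d)" for x :: nat
  have "bij_betw f {0, 1, 2, 3} {a, b, c, d}" unfolding bij_betw_def inj_on_def f_def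
    using ab cd dist by auto
  moreover have "(\<lambda>e. f ` e) ` {{0, 1}, {2, 3}} = E" using e ab cd by (auto simp: f_def)
  moreover have "vert {{0::nat, 1}, {2, 3}} = {0, 1, 2, 3}" unfolding vert_def by auto
  ultimately have "graph_iso {{0, 1}, {2, 3}} E" unfolding graph_iso_def V by metis
  thus ?thesis by (rule isoclass_eq)
qed



definition a0 :: "nat \<Rightarrow> (nat set set set \<Rightarrow> real) \<Rightarrow> nat \<Rightarrow> real" where
  "a0 l Phi n = real (n choose l) * Phi (isoclass {})"
definition a1 :: "nat \<Rightarrow> (nat set set set \<Rightarrow> real) \<Rightarrow> nat \<Rightarrow> real" where
  "a1 l Phi n = real ((n - 2) choose (l - 2)) * Phi (isoclass {{0, 1}})"
definition a2 :: "nat \<Rightarrow> (nat set set set \<Rightarrow> real) \<Rightarrow> nat \<Rightarrow> real" where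
  "a2 l Phi n = real ((n - 4) choose (l - 4)) * Phi (isoclass {{0, 1}, {2, 3}})"

definition U5 :: "nat \<Rightarrow> nat \<Rightarrow> nat set set set" where
  "U5 l n = {E. E \<subseteq> Kedges n \<and> 5 \<le> card (vert E) \<and> card (vert E) \<le> l}"
definition T1 :: "nat \<Rightarrow> nat set set set" where
  "T1 n = {E. E \<subseteq> Kedges n \<and> card E = 1}"
definition T4 :: "nat \<Rightarrow> nat set set set" where
  "T4 n = {E. E \<subseteq> Kedges n \<and> card E = 2 \<and> card (vert E) = 4}"

lemma pointwise:
  assumes l4: "l \<ge> 4"
    and hPhi: "\<And>E. is_graph E \<Longrightarrow> card (vert E) \<in> {3, 4} \<Longrightarrow> connected_graph E
           \<Longrightarrow> Phi (isoclass E) = 0"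
    and EU: "E \<in> Uset l n"
  shows "cf l Phi n E * chiE p G E =
     (if E = {} then a0 l Phi n else 0) + (if card E = 1 then a1 l Phi n * chiE p G E else 0)
   + (if card E = 2 \<and> card (vert E) = 4 then a2 l Phi n * chiE p G E else 0)
   + (if 5 \<le> card (vert E) then cf l Phi n E * chiE p G E else 0)"
proof -
  have sub: "E \<subseteq> Kedges n" using EU unfolding Uset_def by blast
  have g: "is_graph E" using sub by (rule sub_Kedges_graph)
  have c1: "card E = 1 \<longleftrightarrow> card (vert E) = 2"
  proof
    assume "card E = 1" thus "card (vert E) = 2" using card_E_1 g by blast
  next
    assume "card (vert E) = 2" hence "E = {vert E}" using card_vert_2 g by blast
    thus "card E = 1" by (metis card.empty card_insert_disjoint empty_iff finite.emptyI One_nat_def)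
  qed
  consider "card (vert E) < 2" | "card (vert E) = 2" | "card (vert E) = 3" | "card (vert E) = 4"
    | "card (vert E) \<ge> 5" by linarith
  thus ?thesis
  proof cases
    case 1
    hence "E = {}" using card_vert_0 g by blast
    thus ?thesis by (simp add: cf_def a0_def chiE_def)
  next
    case 2
    hence "card E = 1" using c1 by simp
    hence "isoclass E = isoclass {{0, 1}}" using iso_K2 sub by blast
    thus ?thesis using 2 \<open>card E = 1\<close> by (auto simp: cf_def a1_def)
  next
    case 3
    have "connected_graph E" using disconnected[OF g] 3 by linarith
    hence "Phi (isoclass E) = 0" using hPhi g 3 by simp
    thus ?thesis using 3 c1 by (auto simp: cf_def)
  next
    case 4
    show ?thesis
    proof (cases "card E = 2")
      case True
      hence "isoclass E = isoclass {{0, 1}, {2, 3}}" using iso_2K2 sub 4 by blast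
      thus ?thesis using 4 True by (auto simp: cf_def a2_def)
    next
      case False
      have "connected_graph E" using disconnected[OF g] 4 False by blast
      hence "Phi (isoclass E) = 0" using hPhi g 4 by simp
      thus ?thesis using 4 c1 False by (auto simp: cf_def)
    qed
  next
    case 5
    hence "E \<noteq> {}" by auto
    thus ?thesis using 5 c1 by auto
  qed
qed

lemma Fpoly_decomp:
  assumes l4: "l \<ge> 4"
    and hPhi: "\<And>E. is_graph E \<Longrightarrow> card (vert E) \<in> {3, 4} \<Longrightarrow> connected_graph E
           \<Longrightarrow> Phi (isoclass E) = 0"
  shows "Fpoly l Phi p n G = a0 l Phi n + a1 l Phi n * (\<Sum>E\<in>T1 n. chiE p G E)
     + a2 l Phi n * (\<Sum>E\<in>T4 n. chiE p G E) + (\<Sum>E\<in>U5 l n. cf l Phi n E * chiE p G E)"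
proof -
  have fU: "finite (Uset l n)" by (rule finite_Uset)
  have "Fpoly l Phi p n G = (\<Sum>E\<in>Uset l n.
     (if E = {} then a0 l Phi n else 0) + (if card E = 1 then a1 l Phi n * chiE p G E else 0)
   + (if card E = 2 \<and> card (vert E) = 4 then a2 l Phi n * chiE p G E else 0)
   + (if 5 \<le> card (vert E) then cf l Phi n E * chiE p G E else 0))"
    unfolding Fpoly_eq by (rule sum.cong[OF refl], rule pointwise[where Phi=Phi, OF l4 hPhi])
  also have "\<dots> = (\<Sum>E\<in>{E\<in>Uset l n. E = {}}. a0 l Phi n)
     + (\<Sum>E\<in>{E\<in>Uset l n. card E = 1}. a1 l Phi n * chiE p G E)
     + (\<Sum>E\<in>{E\<in>Uset l n. card E = 2 \<and> card (vert E) = 4}. a2 l Phi n * chiE p G E)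
     + (\<Sum>E\<in>{E\<in>Uset l n. 5 \<le> card (vert E)}. cf l Phi n E * chiE p G E)"
    by (simp only: sum.distrib sum.inter_filter[OF fU])
  also have "{E\<in>Uset l n. E = {}} = {{}}" unfolding Uset_def by auto
  also have "{E\<in>Uset l n. card E = 1} = T1 n"
  proof (rule set_eqI, rule iffI)
    fix E assume "E \<in> T1 n"
    hence "E \<subseteq> Kedges n" "card E = 1" unfolding T1_def by auto
    moreover have "card (vert E) = 2" using card_E_1 sub_Kedges_graph calculation by blast
    ultimately show "E \<in> {E\<in>Uset l n. card E = 1}" unfolding Uset_def using l4 by simp
  qed (auto simp: Uset_def T1_def)
  also have "{E\<in>Uset l n. card E = 2 \<and> card (vert E) = 4} = T4 n"
    unfolding Uset_def T4_def using l4 by auto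
  also have "{E\<in>Uset l n. 5 \<le> card (vert E)} = U5 l n"
    unfolding Uset_def U5_def by auto
  finally show ?thesis by (simp add: sum_distrib_left)
qed



lemma sq_sum:
  fixes f :: "'a \<Rightarrow> real"
  assumes "finite K"
  shows "(\<Sum>e\<in>K. f e)\<^sup>2 = (\<Sum>e\<in>K. (f e)\<^sup>2) + 2 * (\<Sum>E\<in>{E. E \<subseteq> K \<and> card E = 2}. prod f E)"
  using assms
proof (induction K rule: finite_induct)
  case empty
  have "{E. E \<subseteq> ({}::'a set) \<and> card E = 2} = {}" by auto
  thus ?case by simp
next
  case (insert x K)
  define P where "P = {E. E \<subseteq> K \<and> card E = 2}"
  have fP: "finite P" unfolding P_def by (rule finite_subset[of _ "Pow K"]) (auto simp: insert(1))
  have split: "{E. E \<subseteq> insert x K \<and> card E = 2} = P \<union> (\<lambda>y. {x, y}) ` K"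
  proof (rule set_eqI, rule iffI)
    fix E assume E: "E \<in> {E. E \<subseteq> insert x K \<and> card E = 2}"
    show "E \<in> P \<union> (\<lambda>y. {x, y}) ` K"
    proof (cases "x \<in> E")
      case True
      obtain a b where ab: "E = {a, b}" "a \<noteq> b" using E card_2_iff by (metis (mono_tags, lifting) mem_Collect_eq)
      have "E = {x, b} \<or> E = {x, a}" using True ab by auto
      moreover have "a \<in> insert x K" "b \<in> insert x K" using E ab by auto
      ultimately have "\<exists>y\<in>K. E = {x, y}" using ab True by auto
      thus ?thesis by blast
    next
      case False thus ?thesis using E unfolding P_def by auto
    qed
  next
    fix E assume E: "E \<in> P \<union> (\<lambda>y. {x, y}) ` K"
    show "E \<in> {E. E \<subseteq> insert x K \<and> card E = 2}"
    proof (cases "E \<in> P")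
      case True thus ?thesis unfolding P_def by auto
    next
      case False
      then obtain y where y: "y \<in> K" "E = {x, y}" using E by blast
      hence "x \<noteq> y" using insert(2) by blast
      thus ?thesis using y by auto
    qed
  qed
  have disj: "P \<inter> (\<lambda>y. {x, y}) ` K = {}" unfolding P_def using insert(2) by auto
  have inj: "inj_on (\<lambda>y. {x, y}) K" unfolding inj_on_def using insert(2) by (auto simp: doubleton_eq_iff)
  have "(\<Sum>E\<in>{E. E \<subseteq> insert x K \<and> card E = 2}. prod f E)
      = (\<Sum>E\<in>P. prod f E) + (\<Sum>E\<in>(\<lambda>y. {x, y}) ` K. prod f E)"
    unfolding split by (rule sum.union_disjoint[OF fP _ disj]) (use insert(1) in auto)
  also have "(\<Sum>E\<in>(\<lambda>y. {x, y}) ` K. prod f E) = (\<Sum>y\<in>K. f x * f y)"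
  proof -
    have "prod f {x, y} = f x * f y" if "y \<in> K" for y
      using that insert(2) by (subgoal_tac "x \<noteq> y") auto
    thus ?thesis by (simp add: sum.reindex[OF inj])
  qed
  also have "\<dots> = f x * (\<Sum>y\<in>K. f y)" by (simp add: sum_distrib_left)
  finally have *: "(\<Sum>E\<in>{E. E \<subseteq> insert x K \<and> card E = 2}. prod f E) = (\<Sum>E\<in>P. prod f E) + f x * (\<Sum>y\<in>K. f y)" .
  show ?case unfolding * using insert(1,2) insert(3)[folded P_def]
    by (simp add: power2_eq_square algebra_simps)
qed

definition sig :: "real \<Rightarrow> real" where "sig p = sqrt (p * (1 - p))"
definition beta :: "real \<Rightarrow> real" where "beta p = (1 - 2 * p) / sig p"
definition Lsum :: "real \<Rightarrow> nat \<Rightarrow> nat set set \<Rightarrow> real" where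
  "Lsum p n G = (\<Sum>e\<in>Kedges n. chi p G e)"
definition T2 :: "nat \<Rightarrow> nat set set set" where
  "T2 n = {E. E \<subseteq> Kedges n \<and> card E = 2}"
definition T3 :: "nat \<Rightarrow> nat set set set" where
  "T3 n = {E. E \<subseteq> Kedges n \<and> card E = 2 \<and> card (vert E) \<noteq> 4}"
definition NN :: "nat \<Rightarrow> real" where "NN n = real (card (Kedges n))"

definition gfun :: "nat \<Rightarrow> (nat set set set \<Rightarrow> real) \<Rightarrow> real \<Rightarrow> nat \<Rightarrow> nat \<Rightarrow> real" where
  "gfun l Phi p n k = (let Lk = (real k - p * NN n) / sig p in
     a0 l Phi n + a1 l Phi n * Lk + a2 l Phi n * (Lk\<^sup>2 - NN n - beta p * Lk) / 2)"

definition Dfun :: "nat \<Rightarrow> (nat set set set \<Rightarrow> real) \<Rightarrow> real \<Rightarrow> nat \<Rightarrow> nat set set \<Rightarrow> real" where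
  "Dfun l Phi p n G = (\<Sum>E\<in>U5 l n. cf l Phi n E * chiE p G E) - a2 l Phi n * (\<Sum>E\<in>T3 n. chiE p G E)"

lemma sig_pos: "0 < p \<Longrightarrow> p < 1 \<Longrightarrow> sig p > 0"
  unfolding sig_def by simp

lemma sig_sq: "0 < p \<Longrightarrow> p < 1 \<Longrightarrow> (sig p)\<^sup>2 = p * (1 - p)"
  unfolding sig_def by simp

lemma chi_sq: assumes "0 < p" "p < 1" shows "(chi p G e)\<^sup>2 = 1 + beta p * chi p G e"
proof -
  have s: "sig p > 0" "(sig p)\<^sup>2 = p * (1 - p)" using sig_pos sig_sq assms by auto
  have ss: "sig p * sig p = p * (1 - p)" using s by (simp add: power2_eq_square)
  have sn: "sig p \<noteq> 0" using s by simp
  show ?thesis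
  proof (cases "e \<in> G")
    case True
    hence c: "chi p G e = (1 - p) / sig p" unfolding chi_def sig_def by simp
    have "(1 - p) * (1 - p) = sig p * sig p + (1 - 2 * p) * (1 - p)" unfolding ss by (simp add: algebra_simps)
    thus ?thesis unfolding c beta_def power2_eq_square using sn by (simp add: field_simps)
  next
    case False
    hence c: "chi p G e = (- p) / sig p" unfolding chi_def sig_def by simp
    have "p * p = sig p * sig p + (1 - 2 * p) * (- p)" unfolding ss by (simp add: algebra_simps)
    thus ?thesis unfolding c beta_def power2_eq_square using sn by (simp add: field_simps)
  qed
qed

lemma T1_sum: "(\<Sum>E\<in>T1 n. chiE p G E) = Lsum p n G"
proof -
  have "T1 n = (\<lambda>e. {e}) ` Kedges n" unfolding T1_def by (auto simp: card_1_singleton_iff)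
  moreover have "inj_on (\<lambda>e. {e}) (Kedges n)" by (auto simp: inj_on_def)
  ultimately show ?thesis unfolding Lsum_def chiE_def by (simp add: sum.reindex)
qed

lemma Lsum_card: assumes "G \<subseteq> Kedges n"
  shows "Lsum p n G = (real (card G) - p * NN n) / sig p"
proof -
  have "Lsum p n G = (\<Sum>e\<in>Kedges n. (if e \<in> G then 1 else 0) - p) / sig p"
    unfolding Lsum_def chi_def sig_def by (simp add: sum_divide_distrib)
  also have "(\<Sum>e\<in>Kedges n. (if e \<in> G then 1 else 0) - p) = real (card G) - p * NN n"
  proof -
    have "(\<Sum>e\<in>Kedges n. (if e \<in> G then 1 else 0 :: real)) = real (card (Kedges n \<inter> G))"
      by (simp add: sum.If_cases[OF finite_Kedges] Int_def)
    moreover have "Kedges n \<inter> G = G" using assms by blast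
    ultimately show ?thesis by (simp add: sum_subtractf NN_def)
  qed
  finally show ?thesis .
qed

lemma T2_split: "(\<Sum>E\<in>T2 n. chiE p G E) = (\<Sum>E\<in>T4 n. chiE p G E) + (\<Sum>E\<in>T3 n. chiE p G E)"
proof -
  have f: "finite (T2 n)" unfolding T2_def
    by (rule finite_subset[of _ "Pow (Kedges n)"]) (auto simp: finite_Kedges)
  have "T4 n = T2 n \<inter> {E. card (vert E) = 4}" "T3 n = T2 n - {E. card (vert E) = 4}"
    unfolding T2_def T3_def T4_def by auto
  thus ?thesis by (simp add: sum.Int_Diff[OF f, of _ "{E. card (vert E) = 4}"])
qed

lemma F_eq_g_D:
  assumes p: "0 < p" "p < 1" and l4: "l \<ge> 4"
    and hPhi: "\<And>E. is_graph E \<Longrightarrow> card (vert E) \<in> {3, 4} \<Longrightarrow> connected_graph E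
           \<Longrightarrow> Phi (isoclass E) = 0"
    and G: "G \<subseteq> Kedges n"
  shows "Fpoly l Phi p n G = gfun l Phi p n (card G) + Dfun l Phi p n G"
proof -
  have sq: "(Lsum p n G)\<^sup>2 = NN n + beta p * Lsum p n G + 2 * (\<Sum>E\<in>T2 n. chiE p G E)"
    unfolding Lsum_def T2_def chiE_def sq_sum[OF finite_Kedges] chi_sq[OF p]
    by (simp add: sum.distrib sum_distrib_left NN_def)
  have L: "Lsum p n G = (real (card G) - p * NN n) / sig p" using Lsum_card[OF G] .
  have F: "Fpoly l Phi p n G = a0 l Phi n + a1 l Phi n * (\<Sum>E\<in>T1 n. chiE p G E)
     + a2 l Phi n * (\<Sum>E\<in>T4 n. chiE p G E) + (\<Sum>E\<in>U5 l n. cf l Phi n E * chiE p G E)"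
    by (rule Fpoly_decomp[where Phi=Phi, OF l4 hPhi])
  show ?thesis
    unfolding F gfun_def Dfun_def Let_def T1_sum L[symmetric]
    using sq T2_split[of p G n] by (simp add: algebra_simps)
qed



definition wt :: "real \<Rightarrow> nat \<Rightarrow> nat set set \<Rightarrow> real" where
  "wt p n G = p ^ card G * (1 - p) ^ (card (Kedges n) - card G)"

definition Exp :: "real \<Rightarrow> nat \<Rightarrow> (nat set set \<Rightarrow> real) \<Rightarrow> real" where
  "Exp p n f = (\<Sum>G\<in>Pow (Kedges n). wt p n G * f G)"

lemma wt_nonneg: "0 \<le> p \<Longrightarrow> p \<le> 1 \<Longrightarrow> wt p n G \<ge> 0"
  unfolding wt_def by simp

lemma prob_G_Ex: "prob_G p n S = Exp p n (\<lambda>G. if S G then 1 else 0)"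
proof -
  have eq: "{G. G \<subseteq> Kedges n \<and> S G} = {G \<in> Pow (Kedges n). S G}" by auto
  have f: "finite (Pow (Kedges n))" using finite_Kedges by simp
  show ?thesis unfolding prob_G_def Exp_def wt_def eq sum.inter_filter[OF f]
    by (rule sum.cong) auto
qed

lemma wt_prod: assumes "G \<subseteq> Kedges n"
  shows "wt p n G = (\<Prod>e\<in>Kedges n. if e \<in> G then p else 1 - p)"
proof -
  have "(\<Prod>e\<in>Kedges n. if e \<in> G then p else 1 - p)
      = (\<Prod>e\<in>Kedges n \<inter> {e. e \<in> G}. p) * (\<Prod>e\<in>Kedges n \<inter> - {e. e \<in> G}. 1 - p)"
    by (rule prod.If_cases[OF finite_Kedges])
  also have "Kedges n \<inter> {e. e \<in> G} = G" using assms by auto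
  also have "Kedges n \<inter> - {e. e \<in> G} = Kedges n - G" by auto
  finally show ?thesis unfolding wt_def
    using card_Diff_subset[OF finite_subset[OF assms finite_Kedges] assms] by simp
qed

lemma chiE_prod: assumes "E \<subseteq> Kedges n"
  shows "chiE p G E = (\<Prod>e\<in>Kedges n. if e \<in> E then chi p G e else 1)"
proof -
  have "Kedges n \<inter> E = E" using assms by auto
  thus ?thesis unfolding chiE_def using prod.inter_restrict[OF finite_Kedges[of n], where g="chi p G" and B=E] by simp
qed

lemma Exp_chi2:
  assumes p: "0 < p" "p < 1" and E: "E \<subseteq> Kedges n" and E': "E' \<subseteq> Kedges n"
  shows "Exp p n (\<lambda>G. chiE p G E * chiE p G E') = (if E = E' then 1 else 0)"
proof -
  define K where "K = Kedges n"
  have fK: "finite K" unfolding K_def by (rule finite_Kedges)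
  define c where "c b = ((if b then 1 else 0) - p) / sqrt (p * (1 - p))" for b
  define psi where "psi e b = (if b then p else 1 - p) *
     ((if e \<in> E then c b else 1) * (if e \<in> E' then c b else 1))" for e b
  have chi_c: "chi p G e = c (e \<in> G)" for G e unfolding chi_def c_def by simp
  have pt: "wt p n G * (chiE p G E * chiE p G E') = (\<Prod>e\<in>G. psi e True) * (\<Prod>e\<in>K - G. psi e False)"
    if G: "G \<subseteq> K" for G
  proof -
    have "wt p n G * (chiE p G E * chiE p G E') = (\<Prod>e\<in>K. psi e (e \<in> G))"
      unfolding wt_prod[OF G[unfolded K_def]] chiE_prod[OF E] chiE_prod[OF E'] psi_def chi_c
        prod.distrib[symmetric] K_def by (rule prod.cong) auto
    also have "\<dots> = (\<Prod>e\<in>K \<inter> {e. e \<in> G}. psi e True) * (\<Prod>e\<in>K \<inter> - {e. e \<in> G}. psi e False)"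
      by (subst prod.If_cases[OF fK, symmetric]) (rule prod.cong, auto)
    also have "K \<inter> {e. e \<in> G} = G" using G by auto
    also have "K \<inter> - {e. e \<in> G} = K - G" by auto
    finally show ?thesis .
  qed
  have "Exp p n (\<lambda>G. chiE p G E * chiE p G E') = (\<Sum>X\<in>Pow K. (\<Prod>e\<in>X. psi e True) * (\<Prod>e\<in>K - X. psi e False))"
    unfolding Exp_def K_def[symmetric] by (rule sum.cong) (auto simp: pt)
  also have "\<dots> = (\<Prod>e\<in>K. psi e True + psi e False)" by (rule prod_add[OF fK, symmetric])
  finally have ex: "Exp p n (\<lambda>G. chiE p G E * chiE p G E') = (\<Prod>e\<in>K. psi e True + psi e False)" .
  have s: "sqrt (p * (1 - p)) > 0" "(sqrt (p * (1 - p)))\<^sup>2 = p * (1 - p)" using p by auto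
  have cT: "c True = (1 - p) / sqrt (p * (1 - p))" and cF: "c False = - p / sqrt (p * (1 - p))"
    unfolding c_def by auto
  have both: "p * (c True * c True) + (1 - p) * (c False * c False) = 1"
  proof -
    define t where "t = sqrt (p * (1 - p))"
    have tt: "t * t = p * (1 - p)" "t \<noteq> 0" using s unfolding t_def by (auto simp: power2_eq_square)
    have "p * (c True * c True) + (1 - p) * (c False * c False) = (p * (1 - p)) / (t * t)"
      unfolding cT cF t_def[symmetric] by (simp add: divide_simps) (simp add: algebra_simps)
    thus ?thesis using tt p by simp
  qed
  have one: "p * c True + (1 - p) * c False = 0"
    unfolding cT cF by (simp add: field_simps)
  have fac: "psi e True + psi e False =
      (if e \<in> E \<and> e \<in> E' then 1 else if e \<in> E \<or> e \<in> E' then 0 else 1)" for e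
    unfolding psi_def using both one by (auto simp: algebra_simps)
  show ?thesis
  proof (cases "E = E'")
    case True
    have "(\<Prod>e\<in>K. psi e True + psi e False) = 1" unfolding fac using True by (intro prod.neutral) auto
    thus ?thesis using ex True by simp
  next
    case False
    then obtain e where e: "e \<in> K" "(e \<in> E) \<noteq> (e \<in> E')" using E E' unfolding K_def by blast
    have "(\<Prod>e\<in>K. psi e True + psi e False) = 0"
      using e fK by (subst prod_zero_iff) (auto simp: fac intro!: bexI[of _ e])
    thus ?thesis using False ex by simp
  qed
qed

lemma Exp_sum: "Exp p n (\<lambda>G. \<Sum>i\<in>I. f i G) = (\<Sum>i\<in>I. Exp p n (f i))"
  unfolding Exp_def by (simp add: sum_distrib_left sum.swap[of _ I])

lemma Exp_cmult: "Exp p n (\<lambda>G. c * f G) = c * Exp p n f"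
  unfolding Exp_def by (simp add: sum_distrib_left algebra_simps)

lemma orth:
  assumes p: "0 < p" "p < 1" and W: "W \<subseteq> Pow (Kedges n)"
  shows "Exp p n (\<lambda>G. (\<Sum>E\<in>W. d E * chiE p G E)\<^sup>2) = (\<Sum>E\<in>W. (d E)\<^sup>2)"
proof -
  have fW: "finite W" using W finite_Kedges by (meson finite_Pow_iff finite_subset)
  have "(\<lambda>G. (\<Sum>E\<in>W. d E * chiE p G E)\<^sup>2) = (\<lambda>G. \<Sum>E\<in>W. \<Sum>E'\<in>W. d E * d E' * (chiE p G E * chiE p G E'))"
    by (rule ext) (simp add: power2_eq_square sum_product algebra_simps)
  hence "Exp p n (\<lambda>G. (\<Sum>E\<in>W. d E * chiE p G E)\<^sup>2) = (\<Sum>E\<in>W. \<Sum>E'\<in>W. d E * d E' * Exp p n (\<lambda>G. chiE p G E * chiE p G E'))"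
    by (simp add: Exp_sum Exp_cmult)
  also have "\<dots> = (\<Sum>E\<in>W. \<Sum>E'\<in>W. d E * d E' * (if E = E' then 1 else 0))"
  proof (intro sum.cong refl)
    fix E E' assume "E \<in> W" "E' \<in> W"
    hence "E \<subseteq> Kedges n" "E' \<subseteq> Kedges n" using W by auto
    thus "d E * d E' * Exp p n (\<lambda>G. chiE p G E * chiE p G E') = d E * d E' * (if E = E' then 1 else 0)"
      using Exp_chi2[OF p] by simp
  qed
  also have "\<dots> = (\<Sum>E\<in>W. (d E)\<^sup>2)"
    using fW by (simp add: power2_eq_square if_distrib sum.delta cong: if_cong)
  finally show ?thesis .
qed

lemma Exp_one: assumes "0 < p" "p < 1" shows "Exp p n (\<lambda>G. 1) = 1"
  using Exp_chi2[OF assms, of "{}" n "{}"] by (simp add: chiE_def)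



lemma binom_le_pow_any: "(a choose b) \<le> a ^ b"
proof (cases "b \<le> a")
  case True thus ?thesis by (rule binomial_le_pow)
next
  case False hence "a choose b = 0" by (simp add: binomial_eq_0)
  thus ?thesis by (metis zero_le)
qed

lemma vert_sub_Kedges: "E \<subseteq> Kedges n \<Longrightarrow> vert E \<subseteq> {0..<n}"
  unfolding vert_def Kedges_def by auto

lemma count_v: "card {E. E \<subseteq> Kedges n \<and> card (vert E) = v} \<le> (n choose v) * 2 ^ (2 ^ v)"
proof -
  define I where "I = {S. S \<subseteq> {0..<n} \<and> card S = v}"
  have fI: "finite I" unfolding I_def by (rule finite_subset[of _ "Pow {0..<n}"]) auto
  have sub: "{E. E \<subseteq> Kedges n \<and> card (vert E) = v} \<subseteq> (\<Union>S\<in>I. Pow (Pow S))"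
  proof
    fix E assume E: "E \<in> {E. E \<subseteq> Kedges n \<and> card (vert E) = v}"
    hence "vert E \<in> I" unfolding I_def using vert_sub_Kedges by blast
    moreover have "E \<in> Pow (Pow (vert E))" using edge_sub_vert by blast
    ultimately show "E \<in> (\<Union>S\<in>I. Pow (Pow S))" by blast
  qed
  have fU: "finite (\<Union>S\<in>I. Pow (Pow S))" using fI unfolding I_def by (auto intro: finite_subset[of _ "{0..<n}"])
  have "card {E. E \<subseteq> Kedges n \<and> card (vert E) = v} \<le> card (\<Union>S\<in>I. Pow (Pow S))"
    by (rule card_mono[OF fU sub])
  also have "\<dots> \<le> (\<Sum>S\<in>I. card (Pow (Pow S)))" by (rule card_UN_le[OF fI])
  also have "\<dots> = (\<Sum>S\<in>I. 2 ^ (2 ^ v))"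
  proof (rule sum.cong[OF refl])
    fix S assume "S \<in> I"
    hence "finite S" "card S = v" unfolding I_def by (auto intro: finite_subset)
    thus "card (Pow (Pow S)) = 2 ^ (2 ^ v)" by (simp add: card_Pow)
  qed
  also have "\<dots> = (n choose v) * 2 ^ (2 ^ v)"
    unfolding I_def using n_subsets[of "{0..<n}" v] by simp
  finally show ?thesis .
qed

lemma count_v_real: "real (card {E. E \<subseteq> Kedges n \<and> card (vert E) = v}) \<le> real n ^ v * 2 ^ (2 ^ v)"
proof -
  have "card {E. E \<subseteq> Kedges n \<and> card (vert E) = v} \<le> n ^ v * 2 ^ (2 ^ v)"
    using count_v[of n v] binom_le_pow_any[of n v] by (meson le_trans mult_le_mono1)
  hence "real (card {E. E \<subseteq> Kedges n \<and> card (vert E) = v}) \<le> real (n ^ v * 2 ^ (2 ^ v))"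
    by (simp only: of_nat_le_iff)
  thus ?thesis by simp
qed

lemma T3_sub: "T3 n \<subseteq> {E. E \<subseteq> Kedges n \<and> card (vert E) = 3}"
proof
  fix E assume E: "E \<in> T3 n"
  hence sub: "E \<subseteq> Kedges n" and c2: "card E = 2" and c4: "card (vert E) \<noteq> 4" unfolding T3_def by auto
  obtain e1 e2 where e: "E = {e1, e2}" "e1 \<noteq> e2" using c2 card_2_iff by metis
  have ce: "card e1 = 2" "card e2 = 2" using e sub Kedges_card by auto
  have fe: "finite e1" "finite e2" using ce by (auto intro: card_ge_0_finite)
  have V: "vert E = e1 \<union> e2" unfolding vert_def e by auto
  have le4: "card (e1 \<union> e2) \<le> 4" using card_Un_le[of e1 e2] ce by simp
  have ge3: "card (e1 \<union> e2) \<ge> 3"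
  proof (rule ccontr)
    assume "\<not> 3 \<le> card (e1 \<union> e2)"
    hence lt: "card (e1 \<union> e2) \<le> 2" by simp
    have "e1 = e1 \<union> e2" using card_subset_eq[of "e1 \<union> e2" e1] fe ce lt card_mono[of "e1 \<union> e2" e1]
      by (metis Un_upper1 finite_UnI le_antisym)
    moreover have "e2 = e1 \<union> e2" using card_subset_eq[of "e1 \<union> e2" e2] fe ce lt card_mono[of "e1 \<union> e2" e2]
      by (metis Un_upper2 finite_UnI le_antisym)
    ultimately show False using e(2) by simp
  qed
  show "E \<in> {E. E \<subseteq> Kedges n \<and> card (vert E) = 3}" using sub c4 V le4 ge3 by simp
qed

lemma finite_T3: "finite (T3 n)"
  unfolding T3_def by (rule finite_subset[of _ "Pow (Kedges n)"]) (auto simp: finite_Kedges)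

lemma finite_U5: "finite (U5 l n)"
  unfolding U5_def by (rule finite_subset[of _ "Pow (Kedges n)"]) (auto simp: finite_Kedges)

lemma card_T3: "real (card (T3 n)) \<le> real n ^ 3 * 256"
proof -
  have "card (T3 n) \<le> card {E. E \<subseteq> Kedges n \<and> card (vert E) = 3}"
    by (rule card_mono[OF _ T3_sub]) (rule finite_subset[of _ "Pow (Kedges n)"], auto simp: finite_Kedges)
  hence "real (card (T3 n)) \<le> real (card {E. E \<subseteq> Kedges n \<and> card (vert E) = 3})" by simp
  also have "\<dots> \<le> real n ^ 3 * 2 ^ (2 ^ 3)" by (rule count_v_real)
  finally show ?thesis by simp
qed

definition Mb :: "nat \<Rightarrow> (nat set set set \<Rightarrow> real) \<Rightarrow> real" where
  "Mb l Phi = (\<Sum>C\<in>graph_classes l. \<bar>Phi C\<bar>)"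

lemma Mb_nonneg: "Mb l Phi \<ge> 0" unfolding Mb_def by (simp add: sum_nonneg)

lemma Phi_le_Mb: "C \<in> graph_classes l \<Longrightarrow> \<bar>Phi C\<bar> \<le> Mb l Phi"
  unfolding Mb_def by (rule member_le_sum) (auto simp: finite_graph_classes)

lemma binom_bound: "real ((n - v) choose (l - v)) \<le> real n ^ (l - v)"
proof -
  have "(n - v) choose (l - v) \<le> (n - v) ^ (l - v)" by (rule binom_le_pow_any)
  also have "\<dots> \<le> n ^ (l - v)" by (rule power_mono) auto
  finally show ?thesis by (simp only: of_nat_le_iff of_nat_power[symmetric])
qed

lemma cf_bound: assumes "E \<in> U5 l n"
  shows "(cf l Phi n E)\<^sup>2 \<le> (Mb l Phi)\<^sup>2 * real n ^ (2 * (l - card (vert E)))"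
proof -
  have g: "is_graph E" using assms unfolding U5_def by (auto intro: sub_Kedges_graph)
  hence "isoclass E \<in> graph_classes l" using assms unfolding U5_def graph_classes_def by auto
  hence ph: "\<bar>Phi (isoclass E)\<bar> \<le> Mb l Phi" by (rule Phi_le_Mb)
  have "\<bar>cf l Phi n E\<bar> \<le> real n ^ (l - card (vert E)) * Mb l Phi"
    unfolding cf_def abs_mult using binom_bound ph by (intro mult_mono) auto
  hence "\<bar>cf l Phi n E\<bar>\<^sup>2 \<le> (real n ^ (l - card (vert E)) * Mb l Phi)\<^sup>2"
    by (intro power_mono) auto
  thus ?thesis by (simp add: power_mult_distrib power_mult[symmetric] mult.commute)
qed

lemma a2_bound:
  assumes "isoclass {{0, 1}, {2, 3}} \<in> graph_classes l"
  shows "(a2 l Phi n)\<^sup>2 \<le> (Mb l Phi)\<^sup>2 * real n ^ (2 * (l - 4))"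
proof -
  have ph: "\<bar>Phi (isoclass {{0, 1}, {2, 3}})\<bar> \<le> Mb l Phi" using Phi_le_Mb[OF assms] .
  have "\<bar>a2 l Phi n\<bar> \<le> real n ^ (l - 4) * Mb l Phi"
    unfolding a2_def abs_mult using binom_bound[of n 4 l] ph by (intro mult_mono) auto
  hence "\<bar>a2 l Phi n\<bar>\<^sup>2 \<le> (real n ^ (l - 4) * Mb l Phi)\<^sup>2"
    by (intro power_mono) auto
  thus ?thesis by (simp add: power_mult_distrib power_mult[symmetric] mult.commute)
qed

lemma sumU5_bound:
  assumes n: "n \<ge> 1" and l4: "l \<ge> 4"
  shows "(\<Sum>E\<in>U5 l n. (cf l Phi n E)\<^sup>2) \<le> real l * 2 ^ (2 ^ l) * (Mb l Phi)\<^sup>2 * real n ^ (2 * l - 5)"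
proof -
  define B where "B = 2 ^ (2 ^ l) * (Mb l Phi)\<^sup>2 * real n ^ (2 * l - 5)"
  have "(\<Sum>E\<in>U5 l n. (cf l Phi n E)\<^sup>2) = (\<Sum>v\<in>{5..l}. \<Sum>E\<in>{E\<in>U5 l n. card (vert E) = v}. (cf l Phi n E)\<^sup>2)"
    by (rule sum.group[symmetric]) (auto simp: finite_U5[unfolded U5_def] U5_def)
  also have "\<dots> \<le> (\<Sum>v\<in>{5..l}. B)"
  proof (rule sum_mono)
    fix v assume v: "v \<in> {5..l}"
    have "(\<Sum>E\<in>{E\<in>U5 l n. card (vert E) = v}. (cf l Phi n E)\<^sup>2)
        \<le> (\<Sum>E\<in>{E\<in>U5 l n. card (vert E) = v}. (Mb l Phi)\<^sup>2 * real n ^ (2 * (l - v)))"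
      by (rule sum_mono) (use cf_bound in fastforce)
    also have "\<dots> = real (card {E\<in>U5 l n. card (vert E) = v}) * ((Mb l Phi)\<^sup>2 * real n ^ (2 * (l - v)))"
      by simp
    also have "\<dots> \<le> (real n ^ v * 2 ^ (2 ^ v)) * ((Mb l Phi)\<^sup>2 * real n ^ (2 * (l - v)))"
    proof (rule mult_right_mono)
      have "{E\<in>U5 l n. card (vert E) = v} = {E. E \<subseteq> Kedges n \<and> card (vert E) = v}"
        using v unfolding U5_def by auto
      thus "real (card {E\<in>U5 l n. card (vert E) = v}) \<le> real n ^ v * 2 ^ (2 ^ v)"
        using count_v_real by simp
    qed simp
    also have "\<dots> = 2 ^ (2 ^ v) * (Mb l Phi)\<^sup>2 * real n ^ (2 * l - v)"
    proof -
      have "v + 2 * (l - v) = 2 * l - v" using v by auto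
      hence "real n ^ v * real n ^ (2 * (l - v)) = real n ^ (2 * l - v)" by (simp add: power_add[symmetric])
      thus ?thesis by (simp add: algebra_simps)
    qed
    also have "\<dots> \<le> B" unfolding B_def
    proof (intro mult_mono)
      show "(2::real) ^ 2 ^ v \<le> 2 ^ 2 ^ l" using v by (intro power_increasing) auto
      show "real n ^ (2 * l - v) \<le> real n ^ (2 * l - 5)" using v n by (intro power_increasing) auto
    qed auto
    finally show "(\<Sum>E\<in>{E\<in>U5 l n. card (vert E) = v}. (cf l Phi n E)\<^sup>2) \<le> B" .
  qed
  also have "\<dots> = real (card {5..l}) * B" by simp
  also have "\<dots> \<le> real l * B"
    by (rule mult_right_mono) (auto simp: B_def)
  finally show ?thesis unfolding B_def by (simp add: algebra_simps)
qed

lemma Exp_mono: assumes p: "0 \<le> p" "p \<le> 1" and le: "\<And>G. G \<subseteq> Kedges n \<Longrightarrow> f G \<le> g G"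
  shows "Exp p n f \<le> Exp p n g"
  unfolding Exp_def by (rule sum_mono) (use le wt_nonneg[OF p] in \<open>auto intro: mult_left_mono\<close>)

lemma var_bound:
  assumes p: "0 < p" "p < 1" and n: "n \<ge> 1" and l4: "l \<ge> 4"
    and cls: "isoclass {{0, 1}, {2, 3}} \<in> graph_classes l"
  shows "Exp p n (\<lambda>G. (Dfun l Phi p n G)\<^sup>2) \<le> (2 * (real l * 2 ^ (2 ^ l) + 256) * (Mb l Phi)\<^sup>2) * real n ^ (2 * l - 5)"
proof -
  define S5 where "S5 G = (\<Sum>E\<in>U5 l n. cf l Phi n E * chiE p G E)" for G
  define S3 where "S3 G = (\<Sum>E\<in>T3 n. a2 l Phi n * chiE p G E)" for G
  have D: "Dfun l Phi p n G = S5 G - S3 G" for G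
    unfolding Dfun_def S5_def S3_def by (simp add: sum_distrib_left)
  have "Exp p n (\<lambda>G. (Dfun l Phi p n G)\<^sup>2) \<le> Exp p n (\<lambda>G. 2 * (S5 G)\<^sup>2 + 2 * (S3 G)\<^sup>2)"
  proof (rule Exp_mono)
    fix G
    have "0 \<le> (S5 G + S3 G)\<^sup>2" by simp
    thus "(Dfun l Phi p n G)\<^sup>2 \<le> 2 * (S5 G)\<^sup>2 + 2 * (S3 G)\<^sup>2" unfolding D
      by (simp add: power2_eq_square algebra_simps)
  qed (use p in auto)
  also have "\<dots> = 2 * Exp p n (\<lambda>G. (S5 G)\<^sup>2) + 2 * Exp p n (\<lambda>G. (S3 G)\<^sup>2)"
    unfolding Exp_def by (simp add: sum.distrib sum_distrib_left algebra_simps)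
  also have "Exp p n (\<lambda>G. (S5 G)\<^sup>2) = (\<Sum>E\<in>U5 l n. (cf l Phi n E)\<^sup>2)"
    unfolding S5_def by (rule orth[OF p]) (auto simp: U5_def)
  also have "Exp p n (\<lambda>G. (S3 G)\<^sup>2) = (\<Sum>E\<in>T3 n. (a2 l Phi n)\<^sup>2)"
    unfolding S3_def by (rule orth[OF p]) (auto simp: T3_def)
  also have "(\<Sum>E\<in>T3 n. (a2 l Phi n)\<^sup>2) = real (card (T3 n)) * (a2 l Phi n)\<^sup>2" by simp
  also have "\<dots> \<le> (real n ^ 3 * 256) * ((Mb l Phi)\<^sup>2 * real n ^ (2 * (l - 4)))"
    by (intro mult_mono card_T3 a2_bound[OF cls]) auto
  also have "\<dots> = 256 * (Mb l Phi)\<^sup>2 * real n ^ (2 * l - 5)"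
  proof -
    have "3 + 2 * (l - 4) = 2 * l - 5" using l4 by auto
    hence "real n ^ 3 * real n ^ (2 * (l - 4)) = real n ^ (2 * l - 5)" by (simp add: power_add[symmetric])
    thus ?thesis by (simp add: algebra_simps)
  qed
  finally have "Exp p n (\<lambda>G. (Dfun l Phi p n G)\<^sup>2) \<le> 2 * (\<Sum>E\<in>U5 l n. (cf l Phi n E)\<^sup>2) + 2 * (256 * (Mb l Phi)\<^sup>2 * real n ^ (2 * l - 5))"
    by simp
  also have "\<dots> \<le> 2 * (real l * 2 ^ (2 ^ l) * (Mb l Phi)\<^sup>2 * real n ^ (2 * l - 5)) + 2 * (256 * (Mb l Phi)\<^sup>2 * real n ^ (2 * l - 5))"
    using sumU5_bound[OF n l4] by simp
  finally show ?thesis by (simp add: algebra_simps)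
qed



lemma avg_exists:
  fixes f :: "'a \<Rightarrow> real"
  assumes "finite T" "T \<noteq> {}" "(\<Sum>t\<in>T. f t) \<ge> s"
  shows "\<exists>t\<in>T. f t \<ge> s / real (card T)"
proof (rule ccontr)
  assume "\<not> ?thesis"
  hence lt: "\<And>t. t \<in> T \<Longrightarrow> f t < s / real (card T)" by auto
  have "(\<Sum>t\<in>T. f t) < (\<Sum>t\<in>T. s / real (card T))"
    by (rule sum_strict_mono[OF assms(1,2) lt])
  also have "\<dots> = s" using assms(1,2) by simp
  finally show False using assms(3) by simp
qed

lemma int_count:
  fixes a b :: real
  assumes "a \<le> b"
  shows "real (card {z::int. a \<le> of_int z \<and> of_int z \<le> b}) \<le> b - a + 1"
proof -
  define z where "z = \<lfloor>b\<rfloor> - \<lceil>a\<rceil> + 1"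
  have "{z::int. a \<le> of_int z \<and> of_int z \<le> b} = {\<lceil>a\<rceil>..\<lfloor>b\<rfloor>}"
    by (auto simp: ceiling_le_iff le_floor_iff)
  hence c: "card {z::int. a \<le> of_int z \<and> of_int z \<le> b} = nat z" unfolding z_def by simp
  have zl: "real_of_int z \<le> b - a + 1"
    unfolding z_def using of_int_floor_le[of b] le_of_int_ceiling[of a] by linarith
  have m: "real (nat z) \<le> max 0 (real_of_int z)" by (cases "0 \<le> z") auto
  have "max 0 (real_of_int z) \<le> b - a + 1" using zl assms by simp
  thus ?thesis unfolding c using m by linarith
qed

lemma anticonc:
  fixes Om :: "'a set" and w D F :: "'a \<Rightarrow> real" and X :: "'a \<Rightarrow> nat" and g :: "nat \<Rightarrow> real"
  assumes fO: "finite Om" and w0: "\<And>x. x \<in> Om \<Longrightarrow> w x \<ge> 0"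
    and Fint: "\<And>x. x \<in> Om \<Longrightarrow> F x \<in> \<int>"
    and FgD: "\<And>x. x \<in> Om \<Longrightarrow> F x = g (X x) + D x"
    and DB: "(\<Sum>x\<in>Om. w x * (D x)\<^sup>2) \<le> B" and B0: "B > 0"
    and fK: "finite Ks" and mK: "sum w {x\<in>Om. X x \<in> Ks} \<ge> 3 / 4"
    and cK: "real (card Ks) \<le> m" and m0: "m > 0"
  shows "\<exists>y. sum w {x\<in>Om. F x = y} \<ge> 1 / (4 * m * (2 * sqrt (8 * B) + 1))"
proof -
  define mk where "mk k = sum w {x\<in>Om. X x = k}" for k
  define dk where "dk k = (\<Sum>x\<in>{x\<in>Om. X x = k}. w x * (D x)\<^sup>2)" for k
  have dk0: "dk k \<ge> 0" for k unfolding dk_def using w0 by (auto intro: sum_nonneg)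
  have sub_eq: "{x \<in> {x\<in>Om. X x \<in> Ks}. X x = k} = {x\<in>Om. X x = k}" if "k \<in> Ks" for k
    using that by auto
  have sum_mk: "(\<Sum>k\<in>Ks. mk k) = sum w {x\<in>Om. X x \<in> Ks}"
  proof -
    have "(\<Sum>k\<in>Ks. sum w {x \<in> {x\<in>Om. X x \<in> Ks}. X x = k}) = sum w {x\<in>Om. X x \<in> Ks}"
      by (rule sum.group) (use fO fK in auto)
    thus ?thesis unfolding mk_def using sub_eq by simp
  qed
  have sum_dk: "(\<Sum>k\<in>Ks. dk k) \<le> B"
  proof -
    have "(\<Sum>k\<in>Ks. (\<Sum>x\<in>{x \<in> {x\<in>Om. X x \<in> Ks}. X x = k}. w x * (D x)\<^sup>2)) = (\<Sum>x\<in>{x\<in>Om. X x \<in> Ks}. w x * (D x)\<^sup>2)"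
      by (rule sum.group) (use fO fK in auto)
    also have "\<dots> \<le> (\<Sum>x\<in>Om. w x * (D x)\<^sup>2)"
      by (rule sum_mono2[OF fO]) (use w0 in auto)
    finally show ?thesis unfolding dk_def using DB sub_eq by simp
  qed
  define good where "good = {k\<in>Ks. dk k \<le> 4 * B * mk k}"
  have fg: "finite good" unfolding good_def using fK by simp
  have bad: "(\<Sum>k\<in>Ks - good. mk k) \<le> 1 / 4"
  proof -
    have "(\<Sum>k\<in>Ks - good. mk k) \<le> (\<Sum>k\<in>Ks - good. dk k / (4 * B))"
    proof (rule sum_mono)
      fix k assume "k \<in> Ks - good"
      hence "dk k > 4 * B * mk k" unfolding good_def by auto
      thus "mk k \<le> dk k / (4 * B)" using B0 by (simp add: field_simps)
    qed
    also have "\<dots> = (\<Sum>k\<in>Ks - good. dk k) / (4 * B)" by (simp add: sum_divide_distrib)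
    also have "\<dots> \<le> (\<Sum>k\<in>Ks. dk k) / (4 * B)"
      using B0 by (intro divide_right_mono sum_mono2) (auto simp: fK dk0)
    also have "\<dots> \<le> B / (4 * B)" using B0 sum_dk by (intro divide_right_mono) auto
    also have "\<dots> = 1 / 4" using B0 by simp
    finally show ?thesis .
  qed
  have "(\<Sum>k\<in>Ks. mk k) = (\<Sum>k\<in>good. mk k) + (\<Sum>k\<in>Ks - good. mk k)"
  proof -
    have sub: "good \<subseteq> Ks" unfolding good_def by auto
    show ?thesis using sum.subset_diff[OF sub fK, of mk] by (simp add: add.commute)
  qed
  hence sg: "(\<Sum>k\<in>good. mk k) \<ge> 1 / 2" using bad sum_mk mK by linarith
  hence "good \<noteq> {}" by auto
  then obtain k where k: "k \<in> good" "mk k \<ge> (1 / 2) / real (card good)"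
    using avg_exists[OF fg _ sg] by blast
  have "card good \<le> card Ks" unfolding good_def using fK by (intro card_mono) auto
  hence "real (card good) \<le> m" using cK by linarith
  moreover have "card good > 0" using \<open>good \<noteq> {}\<close> fg by (simp add: card_gt_0_iff)
  ultimately have "(1 / 2) / real (card good) \<ge> (1 / 2) / m"
    by (intro divide_left_mono) auto
  hence mk_low: "mk k \<ge> 1 / (2 * m)" using k by simp
  have kgood: "dk k \<le> 4 * B * mk k" using k unfolding good_def by simp
  define t where "t = sqrt (8 * B)"
  have t0: "t \<ge> 0" unfolding t_def using B0 by simp
  define A where "A = {x\<in>Om. X x = k \<and> (D x)\<^sup>2 \<le> 8 * B}"
  have fA: "finite A" unfolding A_def using fO by simp
  have mA: "sum w A \<ge> mk k / 2"
  proof -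
    define A' where "A' = {x\<in>Om. X x = k \<and> \<not> (D x)\<^sup>2 \<le> 8 * B}"
    have split: "mk k = sum w A + sum w A'"
    proof -
      have "{x\<in>Om. X x = k} = A \<union> A'" "A \<inter> A' = {}" unfolding A_def A'_def by auto
      thus ?thesis unfolding mk_def using fO by (simp add: sum.union_disjoint A_def A'_def)
    qed
    have "sum w A' \<le> (\<Sum>x\<in>A'. w x * (D x)\<^sup>2 / (8 * B))"
    proof (rule sum_mono)
      fix x assume x: "x \<in> A'"
      hence "(D x)\<^sup>2 / (8 * B) \<ge> 1" "w x \<ge> 0" unfolding A'_def using B0 w0 by auto
      thus "w x \<le> w x * (D x)\<^sup>2 / (8 * B)"
        using mult_left_mono[of 1 "(D x)\<^sup>2 / (8 * B)" "w x"] by simp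
    qed
    also have "\<dots> = (\<Sum>x\<in>A'. w x * (D x)\<^sup>2) / (8 * B)" by (simp add: sum_divide_distrib)
    also have "\<dots> \<le> dk k / (8 * B)" unfolding dk_def A'_def
      using B0 fO w0 by (intro divide_right_mono sum_mono2) auto
    also have "\<dots> \<le> (4 * B * mk k) / (8 * B)" using B0 kgood by (intro divide_right_mono) auto
    also have "\<dots> = mk k / 2" using B0 by simp
    finally show ?thesis using split by simp
  qed
  define Y where "Y = real_of_int ` {z::int. g k - t \<le> of_int z \<and> of_int z \<le> g k + t}"
  have fY: "finite Y" unfolding Y_def
    by (rule finite_imageI, rule finite_subset[of _ "{\<lceil>g k - t\<rceil>..\<lfloor>g k + t\<rfloor>}"])
       (auto simp: ceiling_le_iff le_floor_iff)
  have cY: "real (card Y) \<le> 2 * t + 1"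
  proof -
    have "card Y \<le> card {z::int. g k - t \<le> of_int z \<and> of_int z \<le> g k + t}"
      unfolding Y_def by (rule card_image_le, rule finite_subset[of _ "{\<lceil>g k - t\<rceil>..\<lfloor>g k + t\<rfloor>}"])
        (auto simp: ceiling_le_iff le_floor_iff)
    hence "real (card Y) \<le> real (card {z::int. g k - t \<le> of_int z \<and> of_int z \<le> g k + t})" by simp
    also have "\<dots> \<le> (g k + t) - (g k - t) + 1" using t0 by (intro int_count) simp
    finally show ?thesis by simp
  qed
  have FY: "F x \<in> Y" if x: "x \<in> A" for x
  proof -
    have xO: "x \<in> Om" and Xx: "X x = k" and Dx: "(D x)\<^sup>2 \<le> 8 * B" using x unfolding A_def by auto
    have "\<bar>D x\<bar> \<le> t" unfolding t_def using Dx real_sqrt_le_mono[OF Dx] by simp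
    moreover have "F x = g k + D x" using FgD[OF xO] Xx by simp
    moreover obtain z where z: "F x = of_int z" using Fint[OF xO] Ints_cases by metis
    ultimately have "z \<in> {z::int. g k - t \<le> of_int z \<and> of_int z \<le> g k + t}" by (auto simp: abs_le_iff)
    thus ?thesis unfolding Y_def z by blast
  qed
  have "A \<noteq> {}"
  proof
    assume "A = {}"
    hence "mk k \<le> 0" using mA by simp
    thus False using mk_low m0 by (smt (verit) divide_pos_pos)
  qed
  hence "Y \<noteq> {}" using FY by blast
  have "(\<Sum>y\<in>Y. sum w {x\<in>A. F x = y}) = sum w A"
    by (rule sum.group) (use fA fY FY in auto)
  hence "(\<Sum>y\<in>Y. sum w {x\<in>A. F x = y}) \<ge> mk k / 2" using mA by simp
  then obtain y where y: "y \<in> Y" "sum w {x\<in>A. F x = y} \<ge> (mk k / 2) / real (card Y)"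
    using avg_exists[OF fY \<open>Y \<noteq> {}\<close>] by blast
  have cY0: "real (card Y) > 0" using \<open>Y \<noteq> {}\<close> fY by (simp add: card_gt_0_iff)
  have "1 / (4 * m * (2 * sqrt (8 * B) + 1)) = (1 / (2 * m) / 2) / (2 * t + 1)"
    unfolding t_def by (simp add: field_simps)
  also have "\<dots> \<le> (mk k / 2) / (2 * t + 1)"
    using mk_low t0 by (intro divide_right_mono) auto
  also have "\<dots> \<le> (mk k / 2) / real (card Y)"
    using cY cY0 mk_low m0 by (intro divide_left_mono) (auto intro: order_trans[rotated])
  also have "\<dots> \<le> sum w {x\<in>A. F x = y}" by (rule y(2))
  also have "\<dots> \<le> sum w {x\<in>Om. F x = y}"
    by (rule sum_mono2) (use fO w0 in \<open>auto simp: A_def\<close>)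
  finally show ?thesis by blast
qed



lemma l_ge_4: assumes "isoclass {{0, 1}, {2, 3}} \<in> graph_classes l" shows "l \<ge> 4"
proof -
  obtain E where E: "isoclass {{0, 1}, {2, 3}} = isoclass E" "is_graph E" "card (vert E) \<le> l"
    using assms unfolding graph_classes_def by blast
  have g: "is_graph {{0::nat, 1}, {2, 3}}" unfolding is_graph_def by auto
  hence "{{0::nat, 1}, {2, 3}} \<in> isoclass E" using E(1) isoclass_mem by metis
  hence "graph_iso E {{0, 1}, {2, 3}}" unfolding isoclass_def by blast
  hence "card (vert E) = card (vert {{0::nat, 1}, {2, 3}})" by (rule graph_iso_card)
  also have "vert {{0::nat, 1}, {2, 3}} = {0, 1, 2, 3}" unfolding vert_def by auto
  finally show ?thesis using E(3) by simp
qed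

lemma card_Kedges_le: "real (card (Kedges n)) \<le> real n ^ 2"
proof -
  have "Kedges n \<subseteq> (\<lambda>(i, j). {i, j}) ` ({0..<n} \<times> {0..<n})" unfolding Kedges_def by auto
  hence "card (Kedges n) \<le> card ((\<lambda>(i, j). {i, j}) ` ({0..<n} \<times> {0..<n}))"
    by (intro card_mono) auto
  also have "\<dots> \<le> card ({0..<n} \<times> {0..<n})" by (rule card_image_le) auto
  also have "\<dots> = n ^ 2" by (simp add: power2_eq_square)
  finally have "card (Kedges n) \<le> n ^ 2" .
  hence "real (card (Kedges n)) \<le> real (n ^ 2)" by (simp only: of_nat_le_iff)
  thus ?thesis by simp
qed

lemma card_Kedges_pos: "n \<ge> 2 \<Longrightarrow> card (Kedges n) \<ge> 1"
proof -
  assume "n \<ge> 2"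
  hence "{0, 1} \<in> Kedges n" unfolding Kedges_def by force
  hence "Kedges n \<noteq> {}" by blast
  thus "card (Kedges n) \<ge> 1" using finite_Kedges by (simp add: Suc_le_eq card_gt_0_iff)
qed

lemma card_T1: "card (T1 n) = card (Kedges n)"
proof -
  have "T1 n = (\<lambda>e. {e}) ` Kedges n" unfolding T1_def by (auto simp: card_1_singleton_iff)
  moreover have "inj_on (\<lambda>e. {e}) (Kedges n)" by (auto simp: inj_on_def)
  ultimately show ?thesis by (simp add: card_image)
qed

lemma Exp_L2: assumes p: "0 < p" "p < 1" shows "Exp p n (\<lambda>G. (Lsum p n G)\<^sup>2) = NN n"
proof -
  have "Exp p n (\<lambda>G. (Lsum p n G)\<^sup>2) = Exp p n (\<lambda>G. (\<Sum>E\<in>T1 n. 1 * chiE p G E)\<^sup>2)"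
    using T1_sum by simp
  also have "\<dots> = (\<Sum>E\<in>T1 n. 1\<^sup>2)" by (rule orth[OF p]) (auto simp: T1_def)
  also have "\<dots> = NN n" by (simp add: card_T1 NN_def)
  finally show ?thesis .
qed

lemma final_arith:
  assumes n: "n \<ge> 1" and l4: "l \<ge> 4" and C: "C > 0"
  shows "(1 / (12 * (2 * sqrt (8 * C) + 1))) * real n powr (3 / 2 - real l)
     \<le> 1 / (4 * (3 * real n) * (2 * sqrt (8 * (C * real n ^ (2 * l - 5))) + 1))"
proof -
  define q where "q = real n powr (real l - 5 / 2)"
  have n0: "real n > 0" using n by simp
  have q1: "q \<ge> 1" unfolding q_def using n l4 by (intro ge_one_powr_ge_zero) auto
  have "real n ^ (2 * l - 5) = real n powr (real (2 * l - 5))" using n0 by (simp add: powr_realpow)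
  also have "real (2 * l - 5) = (real l - 5 / 2) + (real l - 5 / 2)" using l4 by (simp add: of_nat_diff)
  also have "real n powr \<dots> = q * q" unfolding q_def by (rule powr_add)
  finally have nq: "real n ^ (2 * l - 5) = q * q" .
  have sq: "sqrt (8 * (C * real n ^ (2 * l - 5))) = sqrt (8 * C) * q"
    unfolding nq using q1 by (simp add: real_sqrt_mult)
  have np: "real n powr (3 / 2 - real l) = 1 / (real n * q)"
  proof -
    have "real n powr (1 + (real l - 5 / 2)) = real n powr 1 * q"
      unfolding q_def by (rule powr_add)
    hence "real n * q = real n powr (1 + (real l - 5 / 2))" using n0 by simp
    also have "1 + (real l - 5 / 2) = - (3 / 2 - real l)" by simp
    finally have eq: "real n * q = real n powr - (3 / 2 - real l)" .
    have "real n powr (3 / 2 - real l) = inverse (real n powr - (3 / 2 - real l))"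
      by (simp only: powr_minus inverse_inverse_eq)
    also have "\<dots> = inverse (real n * q)" by (simp only: eq)
    finally show ?thesis by (simp only: inverse_eq_divide)
  qed
  define s where "s = sqrt (8 * C)"
  have s0: "s \<ge> 0" unfolding s_def using C by simp
  have sq0: "s * q \<ge> 0" using s0 q1 by simp
  have e1: "(2 * s + 1) * q = 2 * (s * q) + q" by (simp add: algebra_simps)
  have h1: "2 * (s * q) + 1 \<le> (2 * s + 1) * q" unfolding e1 using q1 by linarith
  have h2: "12 * real n * (2 * (s * q) + 1) \<le> 12 * real n * ((2 * s + 1) * q)"
    by (rule mult_left_mono[OF h1]) simp
  have e2: "4 * (3 * real n) * (2 * sqrt (8 * (C * real n ^ (2 * l - 5))) + 1) = 12 * real n * (2 * (s * q) + 1)"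
    unfolding sq s_def[symmetric] by (simp add: algebra_simps)
  have e3: "12 * (2 * s + 1) * (real n * q) = 12 * real n * ((2 * s + 1) * q)" by (simp add: algebra_simps)
  have pos: "0 < 12 * real n * (2 * (s * q) + 1)" using n0 sq0 by simp
  have "1 / (12 * real n * ((2 * s + 1) * q)) \<le> 1 / (12 * real n * (2 * (s * q) + 1))"
  proof -
    have pos2: "0 < 12 * real n * ((2 * s + 1) * q)" using pos h2 by linarith
    show ?thesis by (rule divide_left_mono[OF h2 zero_le_one mult_pos_pos[OF pos2 pos]])
  qed
  moreover have "(1 / (12 * (2 * s + 1))) * (1 / (real n * q)) = 1 / (12 * real n * ((2 * s + 1) * q))"
    by (simp add: algebra_simps)
  ultimately show ?thesis unfolding np e2 s_def[symmetric] by linarith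
qed

lemma theorem6p1_aux:
  fixes p :: real and l :: nat and Phi :: "nat set set set \<Rightarrow> real"
  assumes p: "0 < p" "p < 1"
    and hPhi: "\<And>E. is_graph E \<Longrightarrow> card (vert E) \<in> {3, 4} \<Longrightarrow> connected_graph E
           \<Longrightarrow> Phi (isoclass E) = 0"
    and cls: "isoclass {{0, 1}, {2, 3}} \<in> graph_classes l"
    and Fint: "\<And>n G. G \<subseteq> Kedges n \<Longrightarrow> Fpoly l Phi p n G \<in> \<int>"
    and n: "n \<ge> 2"
  shows "\<exists>y. prob_G p n (\<lambda>G. Fpoly l Phi p n G = y) \<ge>
     (1 / (12 * (2 * sqrt (8 * (2 * (real l * 2 ^ (2 ^ l) + 256) * (Mb l Phi)\<^sup>2 + 1)) + 1)))
       * real n powr (3 / 2 - real l)"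
proof -
  have l4: "l \<ge> 4" by (rule l_ge_4[OF cls])
  define C where "C = 2 * (real l * 2 ^ (2 ^ l) + 256) * (Mb l Phi)\<^sup>2 + 1"
  have C0: "C > 0" unfolding C_def by (intro add_nonneg_pos mult_nonneg_nonneg) auto
  define B where "B = C * real n ^ (2 * l - 5)"
  have B0: "B > 0" unfolding B_def using C0 n by simp
  define K where "K = Kedges n"
  define N where "N = NN n"
  have N1: "N \<ge> 1" unfolding N_def NN_def using card_Kedges_pos[OF n] by simp
  have Nle: "N \<le> real n ^ 2" unfolding N_def NN_def by (rule card_Kedges_le)
  define R where "R = 2 * sig p * sqrt N"
  define Ks where "Ks = {k. k \<le> card K \<and> \<bar>real k - p * N\<bar> \<le> R}"
  have fKs: "finite Ks" unfolding Ks_def by simp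
  have sg: "sig p > 0" "(sig p)\<^sup>2 = p * (1 - p)" using sig_pos sig_sq p by auto
  have w0: "\<And>G. wt p n G \<ge> 0" using p wt_nonneg by auto
  have fO: "finite (Pow K)" unfolding K_def using finite_Kedges by simp
  have tot: "sum (wt p n) (Pow K) = 1" using Exp_one[OF p, of n] unfolding Exp_def K_def by simp
  define bad where "bad = {G\<in>Pow K. card G \<notin> Ks}"
  have bad_le: "sum (wt p n) bad \<le> 1 / 4"
  proof -
    have "sum (wt p n) bad \<le> (\<Sum>G\<in>bad. wt p n G * (Lsum p n G)\<^sup>2 / (4 * N))"
    proof (rule sum_mono)
      fix G assume G: "G \<in> bad"
      hence GK: "G \<subseteq> K" and nk: "card G \<notin> Ks" unfolding bad_def by auto
      have "card G \<le> card K" using GK fO by (intro card_mono) (auto simp: K_def finite_Kedges)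
      hence "\<bar>real (card G) - p * N\<bar> > R" using nk unfolding Ks_def by auto
      moreover have "R \<ge> 0" unfolding R_def using sg N1 by simp
      ultimately have "R\<^sup>2 < \<bar>real (card G) - p * N\<bar>\<^sup>2" by (intro power_strict_mono) auto
      hence "(real (card G) - p * N)\<^sup>2 > R\<^sup>2" by simp
      moreover have "R\<^sup>2 = 4 * (sig p)\<^sup>2 * N" unfolding R_def using N1
        by (simp add: power_mult_distrib)
      ultimately have x2: "4 * N * (sig p)\<^sup>2 < (real (card G) - p * N)\<^sup>2" by (simp add: mult_ac)
      have s2: "(sig p)\<^sup>2 > 0" using sg(1) by simp
      have "(real (card G) - p * N)\<^sup>2 / (sig p)\<^sup>2 > 4 * N"
        using x2 s2 by (simp only: pos_less_divide_eq)
      moreover have "Lsum p n G = (real (card G) - p * N) / sig p"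
        using Lsum_card GK unfolding K_def N_def by simp
      ultimately have "(Lsum p n G)\<^sup>2 > 4 * N" by (simp add: power_divide)
      hence "(Lsum p n G)\<^sup>2 / (4 * N) \<ge> 1" using N1 by (simp add: pos_le_divide_eq)
      thus "wt p n G \<le> wt p n G * (Lsum p n G)\<^sup>2 / (4 * N)"
        using mult_left_mono[of 1 "(Lsum p n G)\<^sup>2 / (4 * N)" "wt p n G"] w0 by simp
    qed
    also have "\<dots> = (\<Sum>G\<in>bad. wt p n G * (Lsum p n G)\<^sup>2) / (4 * N)" by (simp add: sum_divide_distrib)
    also have "\<dots> \<le> (\<Sum>G\<in>Pow K. wt p n G * (Lsum p n G)\<^sup>2) / (4 * N)"
      using N1 w0 fO by (intro divide_right_mono sum_mono2) (auto simp: bad_def)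
    also have "(\<Sum>G\<in>Pow K. wt p n G * (Lsum p n G)\<^sup>2) = N"
      using Exp_L2[OF p, of n] unfolding Exp_def K_def N_def by simp
    also have "N / (4 * N) = 1 / 4" using N1 by simp
    finally show ?thesis .
  qed
  have mK: "sum (wt p n) {G\<in>Pow K. card G \<in> Ks} \<ge> 3 / 4"
  proof -
    have "sum (wt p n) (Pow K) = sum (wt p n) {G\<in>Pow K. card G \<in> Ks} + sum (wt p n) bad"
      unfolding bad_def using fO by (subst sum.union_disjoint[symmetric]) (auto intro: sum.cong)
    thus ?thesis using tot bad_le by linarith
  qed
  have cK: "real (card Ks) \<le> 3 * real n"
  proof -
    have "sig p \<le> 1 / 2"
    proof -
      have e: "p * (1 - p) = 1 / 4 - (p - 1 / 2)\<^sup>2" by (simp add: power2_eq_square algebra_simps)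
      have "(p - 1 / 2)\<^sup>2 \<ge> 0" by simp
      hence "(sig p)\<^sup>2 \<le> (1 / 2)\<^sup>2" using sg(2) e by (simp add: power2_eq_square)
      thus ?thesis by (rule power2_le_imp_le) simp
    qed
    moreover have "sqrt N \<le> real n" using Nle by (simp add: real_le_lsqrt)
    moreover have "2 * sig p * sqrt N \<le> 1 * sqrt N"
      using \<open>sig p \<le> 1 / 2\<close> N1 by (intro mult_right_mono) auto
    ultimately have Rn: "R \<le> real n" unfolding R_def by linarith
    have R0: "R \<ge> 0" unfolding R_def using sg N1 by simp
    have "card Ks = card (int ` Ks)" by (simp add: card_image)
    also have "\<dots> \<le> card {z::int. p * N - R \<le> of_int z \<and> of_int z \<le> p * N + R}"
    proof (rule card_mono)
      show "finite {z::int. p * N - R \<le> of_int z \<and> of_int z \<le> p * N + R}"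
        by (rule finite_subset[of _ "{\<lceil>p * N - R\<rceil>..\<lfloor>p * N + R\<rfloor>}"]) (auto simp: ceiling_le_iff le_floor_iff)
      show "int ` Ks \<subseteq> {z::int. p * N - R \<le> of_int z \<and> of_int z \<le> p * N + R}"
        unfolding Ks_def by (auto simp: abs_le_iff)
    qed
    finally have "real (card Ks) \<le> real (card {z::int. p * N - R \<le> of_int z \<and> of_int z \<le> p * N + R})"
      by (simp only: of_nat_le_iff)
    also have "\<dots> \<le> (p * N + R) - (p * N - R) + 1" using R0 by (intro int_count) simp
    finally show ?thesis using Rn n by simp
  qed
  have DB: "(\<Sum>G\<in>Pow K. wt p n G * (Dfun l Phi p n G)\<^sup>2) \<le> B"
  proof -
    have "(\<Sum>G\<in>Pow K. wt p n G * (Dfun l Phi p n G)\<^sup>2) = Exp p n (\<lambda>G. (Dfun l Phi p n G)\<^sup>2)"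
      unfolding Exp_def K_def ..
    also have "\<dots> \<le> (2 * (real l * 2 ^ (2 ^ l) + 256) * (Mb l Phi)\<^sup>2) * real n ^ (2 * l - 5)"
      using var_bound[OF p _ l4 cls] n by simp
    also have "\<dots> \<le> B" unfolding B_def C_def by (simp add: algebra_simps)
    finally show ?thesis .
  qed
  obtain y where y: "sum (wt p n) {G\<in>Pow K. Fpoly l Phi p n G = y} \<ge> 1 / (4 * (3 * real n) * (2 * sqrt (8 * B) + 1))"
  proof (rule exE[OF anticonc[where Om = "Pow K" and w = "wt p n" and F = "Fpoly l Phi p n"
        and D = "Dfun l Phi p n" and X = card and g = "gfun l Phi p n" and B = B and Ks = Ks and m = "3 * real n"]])
    show "finite (Pow K)" by (rule fO)
    show "\<And>x. x \<in> Pow K \<Longrightarrow> 0 \<le> wt p n x" using w0 by simp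
    show "\<And>x. x \<in> Pow K \<Longrightarrow> Fpoly l Phi p n x \<in> \<int>" using Fint unfolding K_def by simp
    show "\<And>x. x \<in> Pow K \<Longrightarrow> Fpoly l Phi p n x = gfun l Phi p n (card x) + Dfun l Phi p n x"
      using F_eq_g_D[where Phi=Phi, OF p l4 hPhi] unfolding K_def by simp
  qed (use DB B0 fKs mK cK n in auto)
  have "prob_G p n (\<lambda>G. Fpoly l Phi p n G = y) = sum (wt p n) {G\<in>Pow K. Fpoly l Phi p n G = y}"
  proof -
    have "{G. G \<subseteq> Kedges n \<and> Fpoly l Phi p n G = y} = {G\<in>Pow K. Fpoly l Phi p n G = y}"
      unfolding K_def by auto
    thus ?thesis unfolding prob_G_def wt_def by simp
  qed
  moreover have "(1 / (12 * (2 * sqrt (8 * C) + 1))) * real n powr (3 / 2 - real l)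
     \<le> 1 / (4 * (3 * real n) * (2 * sqrt (8 * B) + 1))"
    unfolding B_def using final_arith[OF _ l4 C0, of n] n by simp
  ultimately show ?thesis using y unfolding C_def by (intro exI[of _ y]) linarith
qed

theorem theorem6p1:
  fixes p :: real and l :: nat and Phi :: "nat set set set \<Rightarrow> real"
  assumes "0 < p" "p < 1" "l \<ge> 1"
    and "\<And>E. is_graph E \<Longrightarrow> card (vert E) \<in> {3, 4} \<Longrightarrow> connected_graph E
           \<Longrightarrow> Phi (isoclass E) = 0"
    and "isoclass {{0, 1}} \<in> graph_classes l" "Phi (isoclass {{0, 1}}) \<noteq> 0"
    and "isoclass {{0, 1}, {2, 3}} \<in> graph_classes l" "Phi (isoclass {{0, 1}, {2, 3}}) \<noteq> 0"
    and "\<And>n G. G \<subseteq> Kedges n \<Longrightarrow> Fpoly l Phi p n G \<in> \<int>"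
  shows "\<exists>y :: nat \<Rightarrow> real. \<exists>c > 0. \<exists>N. \<forall>n \<ge> N.
           prob_G p n (\<lambda>G. Fpoly l Phi p n G = y n) \<ge> c * real n powr (3 / 2 - real l)"
proof -
  define c where "c = (1 / (12 * (2 * sqrt (8 * (2 * (real l * 2 ^ (2 ^ l) + 256) * (Mb l Phi)\<^sup>2 + 1)) + 1)))"
  have c0: "c > 0" unfolding c_def by (intro divide_pos_pos mult_pos_pos add_nonneg_pos) auto
  have ex: "\<forall>n. \<exists>y. 2 \<le> n \<longrightarrow> prob_G p n (\<lambda>G. Fpoly l Phi p n G = y) \<ge> c * real n powr (3 / 2 - real l)"
  proof
    fix n :: nat
    show "\<exists>y. 2 \<le> n \<longrightarrow> prob_G p n (\<lambda>G. Fpoly l Phi p n G = y) \<ge> c * real n powr (3 / 2 - real l)"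
    proof (cases "2 \<le> n")
      case True
      then obtain y where "prob_G p n (\<lambda>G. Fpoly l Phi p n G = y) \<ge> c * real n powr (3 / 2 - real l)"
        using theorem6p1_aux[OF assms(1,2,4,7,9) True] unfolding c_def by blast
      thus ?thesis by blast
    qed simp
  qed
  obtain yf where "\<forall>n. 2 \<le> n \<longrightarrow> prob_G p n (\<lambda>G. Fpoly l Phi p n G = yf n) \<ge> c * real n powr (3 / 2 - real l)"
    using choice[OF ex] by blast
  thus ?thesis using c0 by blast
qed


end
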